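(* For a second-countable well-filtered space $X$ the following are equivalent: (1) $X$ is locally compact. (2) $\mathsf{K}(X)$ is a continuous semilattice, and $\xi_X^\sigma:X\to\Sigma\,\mathsf{K}(X)$, $x\mapsto\uparrow x$, is continuous. (3) $\mathsf{K}(X)$ is a continuous semilattice, and $X$ has property Q. (4) $\mathsf{K}(X)$ is a continuous semilattice. (5) $X$ is core compact.
   Context: Spaces are $T_0$; specialization order $x\le y$ iff $x\in\overline{\{y\}}$; saturated = upper set. $\mathsf{K}(X)$ = nonempty compact saturated subsets ordered by reverse inclusion (suprema, when they exist, are intersections). Scott topology on a poset: upper sets $U$ such that every directed $D$ with existing supremum in $U$ meets $U$; $\Sigma Q$ is $Q$ with it. $a\ll b$ means for every directed $D$ with existing $\bigvee D\ge b$ some $d\in D$ has $d\ge a$; $\mathsf{K}(X)$ is a continuous semilattice if it is directed complete and each $K$ is the directed supremum of $\{L:L\ll K\}$. Well-filtered: for open $U$ and $\mathcal K\subseteq\mathsf{K}(X)$ filtered under inclusion, $\bigcap\mathcal K\subseteq U$ implies some $K\in\mathcal K$ lies in $U$. Property Q: $K_1\ll K_2$ iff $K_2\subseteq\operatorname{int}K_1$. Locally compact: neighborhood bases of compact sets. Core compact: open-set lattice is continuous. *)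

theory Defs
  imports "HOL-Analysis.Analysis"
begin

definition directed_in :: "'p set \<Rightarrow> ('p \<Rightarrow> 'p \<Rightarrow> bool) \<Rightarrow> 'p set \<Rightarrow> bool" where
  "directed_in P le D \<longleftrightarrow> D \<subseteq> P \<and> D \<noteq> {} \<and>
     (\<forall>a\<in>D. \<forall>b\<in>D. \<exists>c\<in>D. le a c \<and> le b c)"

definition is_sup_in :: "'p set \<Rightarrow> ('p \<Rightarrow> 'p \<Rightarrow> bool) \<Rightarrow> 'p set \<Rightarrow> 'p \<Rightarrow> bool" where
  "is_sup_in P le D s \<longleftrightarrow> s \<in> P \<and> (\<forall>d\<in>D. le d s) \<and>
     (\<forall>u\<in>P. (\<forall>d\<in>D. le d u) \<longrightarrow> le s u)"

definition way_below_in :: "'p set \<Rightarrow> ('p \<Rightarrow> 'p \<Rightarrow> bool) \<Rightarrow> 'p \<Rightarrow> 'p \<Rightarrow> bool" where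
  "way_below_in P le a b \<longleftrightarrow>
     (\<forall>D s. directed_in P le D \<and> is_sup_in P le D s \<and> le b s \<longrightarrow> (\<exists>d\<in>D. le a d))"

definition directed_complete_in :: "'p set \<Rightarrow> ('p \<Rightarrow> 'p \<Rightarrow> bool) \<Rightarrow> bool" where
  "directed_complete_in P le \<longleftrightarrow> (\<forall>D. directed_in P le D \<longrightarrow> (\<exists>s. is_sup_in P le D s))"

definition continuous_in :: "'p set \<Rightarrow> ('p \<Rightarrow> 'p \<Rightarrow> bool) \<Rightarrow> bool" where
  "continuous_in P le \<longleftrightarrow> directed_complete_in P le \<and>
     (\<forall>b\<in>P. directed_in P le {a\<in>P. way_below_in P le a b} \<and>
             is_sup_in P le {a\<in>P. way_below_in P le a b} b)"

definition scott_open :: "'p set \<Rightarrow> ('p \<Rightarrow> 'p \<Rightarrow> bool) \<Rightarrow> 'p set \<Rightarrow> bool" where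
  "scott_open P le U \<longleftrightarrow> U \<subseteq> P \<and> (\<forall>x\<in>U. \<forall>y\<in>P. le x y \<longrightarrow> y \<in> U) \<and>
     (\<forall>D s. directed_in P le D \<and> is_sup_in P le D s \<and> s \<in> U \<longrightarrow> D \<inter> U \<noteq> {})"

definition scott_topology :: "'p set \<Rightarrow> ('p \<Rightarrow> 'p \<Rightarrow> bool) \<Rightarrow> 'p topology" where
  "scott_topology P le = topology (scott_open P le)"


lemma istopology_scott_open: "istopology (scott_open P le)"
  unfolding istopology_def
proof (intro conjI allI impI)
  fix S T assume S: "scott_open P le S" and T: "scott_open P le T"
  show "scott_open P le (S \<inter> T)"
    unfolding scott_open_def
  proof (intro conjI ballI impI allI)
    show "S \<inter> T \<subseteq> P" using S unfolding scott_open_def by blast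
  next
    fix x y assume "x \<in> S \<inter> T" "y \<in> P" "le x y"
    then show "y \<in> S \<inter> T" using S T unfolding scott_open_def by blast
  next
    fix D s assume a: "directed_in P le D \<and> is_sup_in P le D s \<and> s \<in> S \<inter> T"
    then obtain d1 d2 where d: "d1 \<in> D \<inter> S" "d2 \<in> D \<inter> T"
      using S T unfolding scott_open_def by blast
    then obtain c where c: "c \<in> D" "le d1 c" "le d2 c"
      using a unfolding directed_in_def by blast
    have "c \<in> P" using a c unfolding directed_in_def by blast
    then have "c \<in> S \<inter> T" using S T c d unfolding scott_open_def by blast
    then show "D \<inter> (S \<inter> T) \<noteq> {}" using c by blast
  qed
next
  fix K assume K: "\<forall>U\<in>K. scott_open P le U"
  show "scott_open P le (\<Union>K)"
    unfolding scott_open_def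
  proof (intro conjI ballI impI allI)
    show "\<Union>K \<subseteq> P" using K unfolding scott_open_def by blast
  next
    fix x y assume "x \<in> \<Union>K" "y \<in> P" "le x y"
    then show "y \<in> \<Union>K" using K unfolding scott_open_def by blast
  next
    fix D s assume a: "directed_in P le D \<and> is_sup_in P le D s \<and> s \<in> \<Union>K"
    then obtain U where "U \<in> K" "s \<in> U" by blast
    then have "D \<inter> U \<noteq> {}" using K a unfolding scott_open_def by blast
    then show "D \<inter> \<Union>K \<noteq> {}" using \<open>U \<in> K\<close> by blast
  qed
qed

lemma openin_scott_topology: "openin (scott_topology P le) U \<longleftrightarrow> scott_open P le U"
  unfolding scott_topology_def by (simp add: istopology_scott_open)

definition spec_le :: "'a topology \<Rightarrow> 'a \<Rightarrow> 'a \<Rightarrow> bool" where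
  "spec_le X x y \<longleftrightarrow> x \<in> topspace X \<and> y \<in> topspace X \<and> x \<in> X closure_of {y}"

definition saturated_in :: "'a topology \<Rightarrow> 'a set \<Rightarrow> bool" where
  "saturated_in X A \<longleftrightarrow> A \<subseteq> topspace X \<and> (\<forall>x\<in>A. \<forall>y. spec_le X x y \<longrightarrow> y \<in> A)"

definition KX :: "'a topology \<Rightarrow> 'a set set" where
  "KX X = {K. K \<noteq> {} \<and> compactin X K \<and> saturated_in X K}"

definition KX_le :: "'a set \<Rightarrow> 'a set \<Rightarrow> bool" where
  "KX_le K L \<longleftrightarrow> L \<subseteq> K"

definition up_point :: "'a topology \<Rightarrow> 'a \<Rightarrow> 'a set" where
  "up_point X x = {y. spec_le X x y}"

definition well_filtered :: "'a topology \<Rightarrow> bool" where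
  "well_filtered X \<longleftrightarrow>
     (\<forall>U \<K>. openin X U \<and> \<K> \<subseteq> KX X \<and> \<K> \<noteq> {} \<and>
        (\<forall>A\<in>\<K>. \<forall>B\<in>\<K>. \<exists>C\<in>\<K>. C \<subseteq> A \<and> C \<subseteq> B) \<and> \<Inter>\<K> \<subseteq> U
        \<longrightarrow> (\<exists>K\<in>\<K>. K \<subseteq> U))"

definition property_Q :: "'a topology \<Rightarrow> bool" where
  "property_Q X \<longleftrightarrow> (\<forall>K1\<in>KX X. \<forall>K2\<in>KX X.
      way_below_in (KX X) KX_le K1 K2 \<longleftrightarrow> K2 \<subseteq> X interior_of K1)"

definition core_compact :: "'a topology \<Rightarrow> bool" where
  "core_compact X \<longleftrightarrow> continuous_in {U. openin X U} (\<subseteq>)"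

end

theory Submission
  imports Defs
begin


lemma spec_le_iff:
  "spec_le X x y \<longleftrightarrow> x \<in> topspace X \<and> y \<in> topspace X \<and> (\<forall>U. openin X U \<and> x \<in> U \<longrightarrow> y \<in> U)"
  unfolding spec_le_def in_closure_of by auto

lemma open_upper: "openin X U \<Longrightarrow> x \<in> U \<Longrightarrow> spec_le X x y \<Longrightarrow> y \<in> U"
  unfolding spec_le_iff by blast

lemma spec_le_trans: "spec_le X x y \<Longrightarrow> spec_le X y z \<Longrightarrow> spec_le X x z"
  unfolding spec_le_iff by blast

lemma spec_le_refl: "x \<in> topspace X \<Longrightarrow> spec_le X x x"
  unfolding spec_le_iff by blast

lemma spec_le_top1: "spec_le X x y \<Longrightarrow> x \<in> topspace X"
  unfolding spec_le_iff by blast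

lemma spec_le_top2: "spec_le X x y \<Longrightarrow> y \<in> topspace X"
  unfolding spec_le_iff by blast

definition sat :: "'a topology \<Rightarrow> 'a set \<Rightarrow> 'a set" where
  "sat X C = {y. \<exists>x\<in>C. spec_le X x y}"

lemma sat_saturated: "saturated_in X (sat X C)"
  unfolding saturated_in_def
proof (intro conjI ballI allI impI)
  show "sat X C \<subseteq> topspace X" unfolding sat_def using spec_le_top2[of X] by blast
next
  fix x y assume "x \<in> sat X C" "spec_le X x y"
  then obtain c where "c \<in> C" "spec_le X c x" unfolding sat_def by blast
  then have "spec_le X c y" using \<open>spec_le X x y\<close> spec_le_trans[of X c x y] by simp
  then show "y \<in> sat X C" unfolding sat_def using \<open>c \<in> C\<close> by blast
qed

lemma sat_sub: "C \<subseteq> topspace X \<Longrightarrow> C \<subseteq> sat X C"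
proof
  fix x assume "C \<subseteq> topspace X" "x \<in> C"
  then have "spec_le X x x" using spec_le_refl[of x X] by blast
  then show "x \<in> sat X C" unfolding sat_def using \<open>x \<in> C\<close> by blast
qed

lemma sat_open: "openin X W \<Longrightarrow> C \<subseteq> W \<Longrightarrow> sat X C \<subseteq> W"
proof
  fix y assume "openin X W" "C \<subseteq> W" "y \<in> sat X C"
  then obtain c where "c \<in> C" "spec_le X c y" unfolding sat_def by blast
  then show "y \<in> W" using open_upper[of X W c y] \<open>openin X W\<close> \<open>C \<subseteq> W\<close> by blast
qed

lemma sat_compact:
  assumes "compactin X C" shows "compactin X (sat X C)"
  unfolding compactin_def
proof (intro conjI allI impI)
  show "sat X C \<subseteq> topspace X" unfolding sat_def using spec_le_top2[of X] by blast
next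
  fix \<U> assume u: "(\<forall>U\<in>\<U>. openin X U) \<and> sat X C \<subseteq> \<Union>\<U>"
  have "C \<subseteq> sat X C" using assms sat_sub[of C X] compactin_subset_topspace[of X C] by blast
  then have "C \<subseteq> \<Union>\<U>" using u by blast
  then obtain \<F> where F: "finite \<F>" "\<F> \<subseteq> \<U>" "C \<subseteq> \<Union>\<F>"
    using assms u unfolding compactin_def by blast
  have "sat X C \<subseteq> \<Union>\<F>"
  proof
    fix y assume "y \<in> sat X C"
    then obtain x where "x \<in> C" "spec_le X x y" unfolding sat_def by auto
    then obtain U where "U \<in> \<F>" "x \<in> U" using F by auto
    moreover have "openin X U" using \<open>U \<in> \<F>\<close> F(2) u by blast
    ultimately have "y \<in> U" using open_upper[of X U x y] \<open>spec_le X x y\<close> by blast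
    then show "y \<in> \<Union>\<F>" using \<open>U \<in> \<F>\<close> by auto
  qed
  then show "\<exists>\<F>. finite \<F> \<and> \<F> \<subseteq> \<U> \<and> sat X C \<subseteq> \<Union>\<F>" using F by blast
qed

lemma saturated_sep:
  assumes "saturated_in X K" "y \<in> topspace X" "y \<notin> K"
  shows "\<exists>W. openin X W \<and> K \<subseteq> W \<and> y \<notin> W"
proof -
  have "\<forall>x\<in>K. \<exists>T. openin X T \<and> x \<in> T \<and> y \<notin> T"
  proof
    fix x assume "x \<in> K"
    then have "\<not> spec_le X x y" using assms unfolding saturated_in_def by blast
    moreover have "x \<in> topspace X" using assms(1) \<open>x \<in> K\<close> unfolding saturated_in_def by blast
    ultimately show "\<exists>T. openin X T \<and> x \<in> T \<and> y \<notin> T"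
      using assms(2) spec_le_iff[of X x y] by blast
  qed
  then obtain T where T: "\<forall>x\<in>K. openin X (T x) \<and> x \<in> T x \<and> y \<notin> T x"
    using bchoice[of K "\<lambda>x T. openin X T \<and> x \<in> T \<and> y \<notin> T"] by blast
  have "openin X (\<Union>(T ` K))" using T by auto
  moreover have "K \<subseteq> \<Union>(T ` K)" using T by auto
  moreover have "y \<notin> \<Union>(T ` K)" using T by auto
  ultimately show ?thesis by blast
qed

lemma compactin_use:
  assumes "compactin X K" "\<forall>U\<in>\<U>. openin X U" "K \<subseteq> \<Union>\<U>"
  shows "\<exists>\<F>. finite \<F> \<and> \<F> \<subseteq> \<U> \<and> K \<subseteq> \<Union>\<F>"
proof -
  have "(\<forall>U\<in>\<U>. openin X U) \<and> K \<subseteq> \<Union>\<U> \<longrightarrow> (\<exists>\<F>. finite \<F> \<and> \<F> \<subseteq> \<U> \<and> K \<subseteq> \<Union>\<F>)"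
    using assms(1) unfolding compactin_def by (elim conjE allE[of _ \<U>])
  then show ?thesis using assms(2,3) by simp
qed

lemma up_point_eq: "up_point X x = sat X {x}"
  unfolding up_point_def sat_def by simp

lemma up_point_KX:
  assumes "x \<in> topspace X" shows "up_point X x \<in> KX X"
proof -
  have c: "compactin X {x}" using assms by simp
  have "{x} \<subseteq> sat X {x}" using sat_sub[of "{x}" X] assms by simp
  then show ?thesis unfolding KX_def up_point_eq
    using sat_compact[OF c] sat_saturated[of X "{x}"] by blast
qed

lemma up_point_sub: "x \<in> topspace X \<Longrightarrow> x \<in> up_point X x"
  unfolding up_point_def using spec_le_refl[of x X] by simp

lemma up_point_open: "openin X W \<Longrightarrow> x \<in> W \<Longrightarrow> up_point X x \<subseteq> W"
  unfolding up_point_def using open_upper[of X W x] by auto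

lemma KX_sub: "K \<in> KX X \<Longrightarrow> K \<subseteq> topspace X"
  unfolding KX_def saturated_in_def by simp

lemma KX_ne: "K \<in> KX X \<Longrightarrow> K \<noteq> {}"
  unfolding KX_def by simp

lemma KX_compact: "K \<in> KX X \<Longrightarrow> compactin X K"
  unfolding KX_def by simp

lemma KX_sat: "K \<in> KX X \<Longrightarrow> saturated_in X K"
  unfolding KX_def by simp

lemma directed_KX: "directed_in (KX X) KX_le D \<longleftrightarrow>
   D \<subseteq> KX X \<and> D \<noteq> {} \<and> (\<forall>A\<in>D. \<forall>B\<in>D. \<exists>C\<in>D. C \<subseteq> A \<and> C \<subseteq> B)"
  unfolding directed_in_def KX_le_def by simp

lemma WF_use:
  assumes "well_filtered X" "openin X U" "directed_in (KX X) KX_le D" "\<Inter>D \<subseteq> U"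
  shows "\<exists>K\<in>D. K \<subseteq> U"
proof -
  have "openin X U \<and> D \<subseteq> KX X \<and> D \<noteq> {} \<and>
        (\<forall>A\<in>D. \<forall>B\<in>D. \<exists>C\<in>D. C \<subseteq> A \<and> C \<subseteq> B) \<and> \<Inter>D \<subseteq> U"
    using assms(2,3,4) unfolding directed_KX by simp
  then show ?thesis using assms(1) unfolding well_filtered_def by (elim allE[of _ U] allE[of _ D]) simp
qed

lemma WF_Inter:
  assumes wf: "well_filtered X" and D: "directed_in (KX X) KX_le D"
  shows "\<Inter>D \<in> KX X"
proof -
  have D1: "D \<subseteq> KX X" "D \<noteq> {}" using D unfolding directed_KX by auto
  have ne: "\<Inter>D \<noteq> {}"
  proof
    assume "\<Inter>D = {}"
    then obtain K where "K \<in> D" "K \<subseteq> {}" using WF_use[OF wf openin_empty D] by blast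
    then show False using D1 KX_ne[of K X] by blast
  qed
  obtain K0 where "K0 \<in> D" using D1 by blast
  have tsp: "\<Inter>D \<subseteq> topspace X" using KX_sub[of K0 X] \<open>K0 \<in> D\<close> D1(1) by blast
  have comp: "compactin X (\<Inter>D)"
    unfolding compactin_def
  proof (intro conjI allI impI tsp)
    fix \<U> assume u: "(\<forall>U\<in>\<U>. openin X U) \<and> \<Inter>D \<subseteq> \<Union>\<U>"
    have o: "openin X (\<Union>\<U>)" using u by (intro openin_Union) auto
    have "\<Inter>D \<subseteq> \<Union>\<U>" using u by simp
    then obtain K where K: "K \<in> D" "K \<subseteq> \<Union>\<U>" using WF_use[OF wf o D] by blast
    then have "compactin X K" using D1 KX_compact[of K X] by blast
    then obtain \<F> where F: "finite \<F>" "\<F> \<subseteq> \<U>" "K \<subseteq> \<Union>\<F>"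
      using compactin_use[of X K \<U>] K(2) u by blast
    have "\<Inter>D \<subseteq> K" using K(1) by (rule Inter_lower)
    then have "\<Inter>D \<subseteq> \<Union>\<F>" using F(3) by (rule order_trans)
    then show "\<exists>\<F>. finite \<F> \<and> \<F> \<subseteq> \<U> \<and> \<Inter>D \<subseteq> \<Union>\<F>" using F(1,2) by (intro exI[of _ \<F>]) simp
  qed
  have "saturated_in X (\<Inter>D)" unfolding saturated_in_def
  proof (intro conjI tsp ballI allI impI)
    fix x y assume "x \<in> \<Inter>D" "spec_le X x y"
    show "y \<in> \<Inter>D"
    proof
      fix K assume "K \<in> D"
      then have "saturated_in X K" using D1 KX_sat[of K X] by blast
      then show "y \<in> K" using \<open>x \<in> \<Inter>D\<close> \<open>K \<in> D\<close> \<open>spec_le X x y\<close> unfolding saturated_in_def by blast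
    qed
  qed
  then show ?thesis using ne comp unfolding KX_def by simp
qed

lemma sup_KX_Inter:
  assumes "directed_in (KX X) KX_le D" "\<Inter>D \<in> KX X"
  shows "is_sup_in (KX X) KX_le D s \<longleftrightarrow> s = \<Inter>D"
proof
  assume s: "is_sup_in (KX X) KX_le D s"
  then have "s \<subseteq> \<Inter>D" unfolding is_sup_in_def KX_le_def by blast
  moreover have "\<Inter>D \<subseteq> s" using s assms(2) unfolding is_sup_in_def KX_le_def by blast
  ultimately show "s = \<Inter>D" by blast
next
  assume "s = \<Inter>D"
  then show "is_sup_in (KX X) KX_le D s" using assms(2) unfolding is_sup_in_def KX_le_def by blast
qed

lemma wb_KX:
  assumes wf: "well_filtered X"
  shows "way_below_in (KX X) KX_le A B \<longleftrightarrow>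
     (\<forall>D. directed_in (KX X) KX_le D \<and> \<Inter>D \<subseteq> B \<longrightarrow> (\<exists>d\<in>D. d \<subseteq> A))"
proof
  assume a: "way_below_in (KX X) KX_le A B"
  show "\<forall>D. directed_in (KX X) KX_le D \<and> \<Inter>D \<subseteq> B \<longrightarrow> (\<exists>d\<in>D. d \<subseteq> A)"
  proof (intro allI impI)
    fix D assume D: "directed_in (KX X) KX_le D \<and> \<Inter>D \<subseteq> B"
    have "\<Inter>D \<in> KX X" using WF_Inter[OF wf] D by blast
    then have "is_sup_in (KX X) KX_le D (\<Inter>D)" using sup_KX_Inter[of X D "\<Inter>D"] D by blast
    then show "\<exists>d\<in>D. d \<subseteq> A" using a D unfolding way_below_in_def KX_le_def by blast
  qed
next
  assume a: "\<forall>D. directed_in (KX X) KX_le D \<and> \<Inter>D \<subseteq> B \<longrightarrow> (\<exists>d\<in>D. d \<subseteq> A)"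
  show "way_below_in (KX X) KX_le A B" unfolding way_below_in_def
  proof (intro allI impI)
    fix D s assume D: "directed_in (KX X) KX_le D \<and> is_sup_in (KX X) KX_le D s \<and> KX_le B s"
    have "\<Inter>D \<in> KX X" using WF_Inter[OF wf] D by blast
    then have "s = \<Inter>D" using sup_KX_Inter[of X D s] D by blast
    then show "\<exists>d\<in>D. KX_le A d" using a D unfolding KX_le_def by blast
  qed
qed

lemma WF_directed_complete:
  assumes wf: "well_filtered X" shows "directed_complete_in (KX X) KX_le"
  unfolding directed_complete_in_def
proof (intro allI impI)
  fix D assume D: "directed_in (KX X) KX_le D"
  have "\<Inter>D \<in> KX X" using WF_Inter[OF wf] D by blast
  then have "is_sup_in (KX X) KX_le D (\<Inter>D)" using sup_KX_Inter[of X D "\<Inter>D"] D by blast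
  then show "\<exists>s. is_sup_in (KX X) KX_le D s" by blast
qed

lemma wb_le: "way_below_in (KX X) KX_le A B \<Longrightarrow> B \<in> KX X \<Longrightarrow> B \<subseteq> A"
  unfolding way_below_in_def
  apply (drule spec[of _ "{B}"], drule spec[of _ B])
  by (auto simp: directed_in_def is_sup_in_def KX_le_def)

lemma wb_of_interior:
  assumes wf: "well_filtered X" "B \<subseteq> X interior_of A"
  shows "way_below_in (KX X) KX_le A B"
  unfolding wb_KX[OF wf(1)]
proof (intro allI impI)
  fix D assume D: "directed_in (KX X) KX_le D \<and> \<Inter>D \<subseteq> B"
  have "\<Inter>D \<subseteq> X interior_of A" using D wf(2) by blast
  then obtain d where "d \<in> D" "d \<subseteq> X interior_of A"
    using WF_use[OF wf(1) openin_interior_of] D by blast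
  then show "\<exists>d\<in>D. d \<subseteq> A" using interior_of_subset[of X A] by blast
qed


lemma LC_use:
  assumes "neighbourhood_base_of P X" "openin X W" "x \<in> W"
  shows "\<exists>U V. openin X U \<and> P V \<and> x \<in> U \<and> U \<subseteq> V \<and> V \<subseteq> W"
proof -
  have "\<forall>W x. openin X W \<and> x \<in> W \<longrightarrow> (\<exists>U V. openin X U \<and> P V \<and> x \<in> U \<and> U \<subseteq> V \<and> V \<subseteq> W)"
    using assms(1) unfolding neighbourhood_base_of .
  then show ?thesis using assms(2,3) by simp
qed

lemma LCsep:
  assumes lc: "neighbourhood_base_of (compactin X) X"
    and K: "compactin X K" "K \<noteq> {}" "K \<subseteq> W" "openin X W"
  shows "\<exists>L\<in>KX X. K \<subseteq> X interior_of L \<and> L \<subseteq> W"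
proof -
  define \<U> where "\<U> = {U. openin X U \<and> (\<exists>V. compactin X V \<and> U \<subseteq> V \<and> V \<subseteq> W)}"
  have opU: "\<forall>U\<in>\<U>. openin X U" unfolding \<U>_def by simp
  have "K \<subseteq> \<Union>\<U>"
  proof
    fix x assume "x \<in> K"
    then have "x \<in> W" using K(3) by blast
    then obtain U V where "openin X U" "compactin X V" "x \<in> U" "U \<subseteq> V" "V \<subseteq> W"
      using LC_use[OF lc K(4) \<open>x \<in> W\<close>] by blast
    then have "U \<in> \<U>" unfolding \<U>_def by blast
    then show "x \<in> \<Union>\<U>" using \<open>x \<in> U\<close> by blast
  qed
  then obtain \<F> where F: "finite \<F>" "\<F> \<subseteq> \<U>" "K \<subseteq> \<Union>\<F>"
    using compactin_use[OF K(1) opU] by blast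
  have "\<forall>U\<in>\<F>. \<exists>V. compactin X V \<and> U \<subseteq> V \<and> V \<subseteq> W"
    using F(2) unfolding \<U>_def by blast
  then obtain g where g: "\<forall>U\<in>\<F>. compactin X (g U) \<and> U \<subseteq> g U \<and> g U \<subseteq> W"
    using bchoice[of \<F> "\<lambda>U V. compactin X V \<and> U \<subseteq> V \<and> V \<subseteq> W"] by blast
  define C where "C = \<Union>(g ` \<F>)"
  have cC: "compactin X C" unfolding C_def
    using F(1) g by (intro compactin_Union) auto
  have FC: "\<Union>\<F> \<subseteq> C" unfolding C_def using g by blast
  have CW: "C \<subseteq> W" unfolding C_def using g by blast
  define L where "L = sat X C"
  have CL: "C \<subseteq> L" unfolding L_def using sat_sub[of C X] compactin_subset_topspace[OF cC] by simp
  have "L \<in> KX X"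
  proof -
    have "L \<noteq> {}" using K(2) F(3) FC CL by blast
    then show ?thesis unfolding KX_def L_def using sat_compact[OF cC] sat_saturated[of X C] by simp
  qed
  moreover have "\<Union>\<F> \<subseteq> X interior_of L"
  proof (rule interior_of_maximal)
    show "\<Union>\<F> \<subseteq> L" using FC CL by (rule order_trans)
    show "openin X (\<Union>\<F>)" using F(2) opU by (intro openin_Union) blast
  qed
  then have "K \<subseteq> X interior_of L" using F(3) by (rule order_trans[rotated])
  moreover have "L \<subseteq> W" unfolding L_def using sat_open[OF K(4) CW] .
  ultimately show ?thesis by blast
qed

definition NB :: "'a topology \<Rightarrow> 'a set \<Rightarrow> 'a set set" where
  "NB X b = {L \<in> KX X. b \<subseteq> X interior_of L}"

lemma NB_directed:
  assumes lc: "neighbourhood_base_of (compactin X) X" and b: "b \<in> KX X"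
  shows "directed_in (KX X) KX_le (NB X b)"
  unfolding directed_KX
proof (intro conjI)
  show "NB X b \<subseteq> KX X" unfolding NB_def by blast
  have bc: "compactin X b" "b \<noteq> {}" "b \<subseteq> topspace X" using KX_compact[OF b] KX_ne[OF b] KX_sub[OF b] by auto
  obtain L where "L \<in> KX X" "b \<subseteq> X interior_of L"
    using LCsep[OF lc bc(1) bc(2) bc(3) openin_topspace] by blast
  then show "NB X b \<noteq> {}" unfolding NB_def by blast
  show "\<forall>A\<in>NB X b. \<forall>B\<in>NB X b. \<exists>C\<in>NB X b. C \<subseteq> A \<and> C \<subseteq> B"
  proof (intro ballI)
    fix A B assume "A \<in> NB X b" "B \<in> NB X b"
    then have "b \<subseteq> X interior_of A \<inter> X interior_of B" unfolding NB_def by blast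
    moreover have "openin X (X interior_of A \<inter> X interior_of B)" by (intro openin_Int openin_interior_of)
    ultimately obtain L where L: "L \<in> KX X" "b \<subseteq> X interior_of L" "L \<subseteq> X interior_of A \<inter> X interior_of B"
      using LCsep[OF lc bc(1) bc(2)] by blast
    then have "L \<in> NB X b" unfolding NB_def by blast
    moreover have "L \<subseteq> A" "L \<subseteq> B" using L(3) interior_of_subset[of X A] interior_of_subset[of X B] by blast+
    ultimately show "\<exists>C\<in>NB X b. C \<subseteq> A \<and> C \<subseteq> B" by blast
  qed
qed

lemma NB_Inter:
  assumes lc: "neighbourhood_base_of (compactin X) X" and b: "b \<in> KX X"
  shows "\<Inter>(NB X b) = b"
proof
  show "b \<subseteq> \<Inter>(NB X b)"
  proof (rule Inter_greatest)
    fix L assume "L \<in> NB X b"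
    then have "b \<subseteq> X interior_of L" by (simp add: NB_def)
    then show "b \<subseteq> L" using interior_of_subset[of X L] by (rule order_trans)
  qed
  show "\<Inter>(NB X b) \<subseteq> b"
  proof
    fix y assume y: "y \<in> \<Inter>(NB X b)"
    show "y \<in> b"
    proof (rule ccontr)
      assume "y \<notin> b"
      have bc: "compactin X b" "b \<noteq> {}" "b \<subseteq> topspace X" using KX_compact[OF b] KX_ne[OF b] KX_sub[OF b] by auto
      obtain L where L: "L \<in> KX X" "b \<subseteq> X interior_of L"
        using LCsep[OF lc bc(1) bc(2) bc(3) openin_topspace] by blast
      then have "L \<in> NB X b" unfolding NB_def by blast
      then have "y \<in> L" using y by blast
      then have yt: "y \<in> topspace X" using KX_sub[OF L(1)] by blast
      obtain W where W: "openin X W" "b \<subseteq> W" "y \<notin> W"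
        using saturated_sep[OF KX_sat[OF b] yt \<open>y \<notin> b\<close>] by blast
      obtain L' where L': "L' \<in> KX X" "b \<subseteq> X interior_of L'" "L' \<subseteq> W"
        using LCsep[OF lc bc(1) bc(2) W(2) W(1)] by blast
      then have "L' \<in> NB X b" unfolding NB_def by blast
      then have "y \<in> L'" using y by blast
      then show False using L'(3) W(3) by blast
    qed
  qed
qed

lemma NB_sup:
  assumes lc: "neighbourhood_base_of (compactin X) X" and b: "b \<in> KX X"
  shows "is_sup_in (KX X) KX_le (NB X b) b"
  using sup_KX_Inter[OF NB_directed[OF lc b]] NB_Inter[OF lc b] b by simp

lemma NB_wb:
  assumes wf: "well_filtered X" and "L \<in> NB X b"
  shows "way_below_in (KX X) KX_le L b"
  using wb_of_interior[OF wf] assms(2) unfolding NB_def by blast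

lemma LC_cont:
  assumes wf: "well_filtered X" and lc: "neighbourhood_base_of (compactin X) X"
  shows "continuous_in (KX X) KX_le"
  unfolding continuous_in_def
proof (rule conjI)
  show "directed_complete_in (KX X) KX_le" using WF_directed_complete[OF wf] .
next
  show "\<forall>b\<in>KX X. directed_in (KX X) KX_le {a \<in> KX X. way_below_in (KX X) KX_le a b} \<and>
        is_sup_in (KX X) KX_le {a \<in> KX X. way_below_in (KX X) KX_le a b} b"
  proof
  fix b assume b: "b \<in> KX X"
  define A where "A = {a \<in> KX X. way_below_in (KX X) KX_le a b}"
  have NA: "NB X b \<subseteq> A" unfolding A_def using NB_wb[OF wf] unfolding NB_def by blast
  have dN: "directed_in (KX X) KX_le (NB X b)" using NB_directed[OF lc b] .
  have key: "\<exists>L\<in>NB X b. L \<subseteq> a" if "a \<in> A" for a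
  proof -
    have "way_below_in (KX X) KX_le a b" using that unfolding A_def by blast
    then show ?thesis using dN NB_Inter[OF lc b] unfolding wb_KX[OF wf] by blast
  qed
  have "directed_in (KX X) KX_le A"
    unfolding directed_KX
  proof (intro conjI)
    show "A \<subseteq> KX X" unfolding A_def by blast
    show "A \<noteq> {}" using NA dN unfolding directed_KX by blast
    show "\<forall>a1\<in>A. \<forall>a2\<in>A. \<exists>c\<in>A. c \<subseteq> a1 \<and> c \<subseteq> a2"
    proof (intro ballI)
      fix a1 a2 assume "a1 \<in> A" "a2 \<in> A"
      then obtain L1 L2 where "L1 \<in> NB X b" "L1 \<subseteq> a1" "L2 \<in> NB X b" "L2 \<subseteq> a2"
        using key by blast
      then obtain L3 where "L3 \<in> NB X b" "L3 \<subseteq> L1" "L3 \<subseteq> L2" using dN unfolding directed_KX by blast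
      then have "L3 \<in> A" "L3 \<subseteq> a1" "L3 \<subseteq> a2"
        using NA \<open>L1 \<subseteq> a1\<close> \<open>L2 \<subseteq> a2\<close> by auto
      then show "\<exists>c\<in>A. c \<subseteq> a1 \<and> c \<subseteq> a2" by blast
    qed
  qed
  moreover have "is_sup_in (KX X) KX_le A b"
    unfolding is_sup_in_def KX_le_def
  proof (intro conjI ballI impI b)
    fix d assume "d \<in> A" then show "b \<subseteq> d" using wb_le[of X d b] b unfolding A_def by blast
  next
    fix u assume "u \<in> KX X" "\<forall>d\<in>A. u \<subseteq> d"
    then have "u \<subseteq> \<Inter>(NB X b)" using NA by blast
    then show "u \<subseteq> b" using NB_Inter[OF lc b] by simp
  qed
  ultimately show "directed_in (KX X) KX_le {a \<in> KX X. way_below_in (KX X) KX_le a b} \<and>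
        is_sup_in (KX X) KX_le {a \<in> KX X. way_below_in (KX X) KX_le a b} b"
    unfolding A_def by blast
  qed
qed

lemma LC_Q:
  assumes wf: "well_filtered X" and lc: "neighbourhood_base_of (compactin X) X"
  shows "property_Q X"
  unfolding property_Q_def
proof (intro ballI iffI)
  fix K1 K2 assume K: "K1 \<in> KX X" "K2 \<in> KX X"
  {
    assume "way_below_in (KX X) KX_le K1 K2"
    then obtain L where L: "L \<in> NB X K2" "L \<subseteq> K1"
      using NB_directed[OF lc K(2)] NB_Inter[OF lc K(2)] unfolding wb_KX[OF wf] by blast
    then have "K2 \<subseteq> X interior_of L" unfolding NB_def by blast
    moreover have "X interior_of L \<subseteq> X interior_of K1" using L(2) by (rule interior_of_mono)
    ultimately show "K2 \<subseteq> X interior_of K1" by (rule order_trans)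
  }
  {
    assume "K2 \<subseteq> X interior_of K1"
    then show "way_below_in (KX X) KX_le K1 K2" using wb_of_interior[OF wf] by blast
  }
qed


lemma scott_open_KX: "scott_open (KX X) KX_le (KX X)"
  unfolding scott_open_def directed_in_def by blast

lemma KX_in_scott_top: "K \<in> KX X \<Longrightarrow> K \<in> topspace (scott_topology (KX X) KX_le)"
  using openin_subset[of "scott_topology (KX X) KX_le" "KX X"] scott_open_KX[of X]
  unfolding openin_scott_topology by blast

definition dirO :: "'a topology \<Rightarrow> 'a set set \<Rightarrow> bool" where
  "dirO X D \<longleftrightarrow> D \<noteq> {} \<and> (\<forall>d\<in>D. openin X d) \<and> (\<forall>a\<in>D. \<forall>b\<in>D. \<exists>c\<in>D. a \<subseteq> c \<and> b \<subseteq> c)"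

lemma directed_O: "directed_in {U. openin X U} (\<subseteq>) D \<longleftrightarrow> dirO X D"
  unfolding directed_in_def dirO_def by auto

lemma dirO_open: "dirO X D \<Longrightarrow> d \<in> D \<Longrightarrow> openin X d"
  unfolding dirO_def by blast

lemma dirO_ne: "dirO X D \<Longrightarrow> D \<noteq> {}"
  unfolding dirO_def by blast

lemma dirO_ub: "dirO X D \<Longrightarrow> a \<in> D \<Longrightarrow> b \<in> D \<Longrightarrow> \<exists>c\<in>D. a \<subseteq> c \<and> b \<subseteq> c"
  unfolding dirO_def by blast

lemma sup_OX:
  assumes "\<forall>d\<in>D. openin X d"
  shows "is_sup_in {U. openin X U} (\<subseteq>) D s \<longleftrightarrow> s = \<Union>D"
proof
  assume s: "is_sup_in {U. openin X U} (\<subseteq>) D s"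
  have o: "openin X (\<Union>D)" using assms by (intro openin_Union) blast
  have "\<Union>D \<subseteq> s" using s unfolding is_sup_in_def by blast
  moreover have "s \<subseteq> \<Union>D" using s o unfolding is_sup_in_def by blast
  ultimately show "s = \<Union>D" by (rule antisym[rotated])
next
  assume "s = \<Union>D"
  moreover have o: "openin X (\<Union>D)" using assms by (intro openin_Union) blast
  ultimately show "is_sup_in {U. openin X U} (\<subseteq>) D s" unfolding is_sup_in_def by blast
qed

lemma sup_OX_dir: "dirO X D \<Longrightarrow> is_sup_in {U. openin X U} (\<subseteq>) D s \<longleftrightarrow> s = \<Union>D"
  using sup_OX[of D X s] dirO_open[of X D] by blast

lemma wbO_iff:
  "way_below_in {U. openin X U} (\<subseteq>) V U \<longleftrightarrow> (\<forall>D. dirO X D \<and> U \<subseteq> \<Union>D \<longrightarrow> (\<exists>d\<in>D. V \<subseteq> d))"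
  unfolding way_below_in_def directed_O
proof (intro iffI allI impI)
  fix D assume a: "\<forall>D s. dirO X D \<and> is_sup_in {U. openin X U} (\<subseteq>) D s \<and> U \<subseteq> s \<longrightarrow> (\<exists>d\<in>D. V \<subseteq> d)"
    and D: "dirO X D \<and> U \<subseteq> \<Union>D"
  then have "is_sup_in {U. openin X U} (\<subseteq>) D (\<Union>D)" using sup_OX_dir[of X D "\<Union>D"] by blast
  then show "\<exists>d\<in>D. V \<subseteq> d" using a D by blast
next
  fix D s assume a: "\<forall>D. dirO X D \<and> U \<subseteq> \<Union>D \<longrightarrow> (\<exists>d\<in>D. V \<subseteq> d)"
    and D: "dirO X D \<and> is_sup_in {U. openin X U} (\<subseteq>) D s \<and> U \<subseteq> s"
  then have "s = \<Union>D" using sup_OX_dir[of X D s] by blast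
  then show "\<exists>d\<in>D. V \<subseteq> d" using a D by blast
qed

lemma wbO_D: "way_below_in {U. openin X U} (\<subseteq>) V U \<Longrightarrow> dirO X D \<Longrightarrow> U \<subseteq> \<Union>D \<Longrightarrow> \<exists>d\<in>D. V \<subseteq> d"
  unfolding wbO_iff by blast

lemma wbO_I: "(\<And>D. dirO X D \<Longrightarrow> U \<subseteq> \<Union>D \<Longrightarrow> \<exists>d\<in>D. V \<subseteq> d) \<Longrightarrow> way_below_in {U. openin X U} (\<subseteq>) V U"
  unfolding wbO_iff by blast

lemma directed_finite_ub:
  assumes D: "dirO X D" and "finite F" "F \<subseteq> D"
  shows "\<exists>d\<in>D. \<Union>F \<subseteq> d"
  using assms(2,3)
proof (induction F rule: finite_induct)
  case empty
  then obtain d where "d \<in> D" using dirO_ne[OF D] by blast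
  then show ?case by blast
next
  case (insert x F)
  have "F \<subseteq> D" using insert.prems by simp
  from insert.IH[OF this] obtain d where d: "d \<in> D" "\<Union>F \<subseteq> d" by (elim bexE) simp
  have "x \<in> D" using insert.prems by simp
  then obtain c where c: "c \<in> D" "x \<subseteq> c" "d \<subseteq> c" using dirO_ub[OF D _ d(1)] by blast
  have "\<Union>(insert x F) \<subseteq> c" using c(2,3) d(2) by auto
  then show ?case using c(1) by blast
qed

lemma wbO_le: "openin X U \<Longrightarrow> way_below_in {U. openin X U} (\<subseteq>) V U \<Longrightarrow> V \<subseteq> U"
  using wbO_D[of X V U "{U}"] unfolding dirO_def by auto

lemma wbO_mono:
  assumes "way_below_in {U. openin X U} (\<subseteq>) V U" "V' \<subseteq> V" "U \<subseteq> U'"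
  shows "way_below_in {U. openin X U} (\<subseteq>) V' U'"
proof (rule wbO_I)
  fix D assume "dirO X D" "U' \<subseteq> \<Union>D"
  then obtain d where "d \<in> D" "V \<subseteq> d" using wbO_D[OF assms(1)] assms(3) by (meson order_trans)
  then show "\<exists>d\<in>D. V' \<subseteq> d" using assms(2) by blast
qed

lemma wbO_empty: "way_below_in {U. openin X U} (\<subseteq>) {} U"
proof (rule wbO_I)
  fix D assume "dirO X D"
  then obtain d where "d \<in> D" using dirO_ne by blast
  then show "\<exists>d\<in>D. {} \<subseteq> d" by blast
qed

lemma wbO_Un:
  assumes "way_below_in {U. openin X U} (\<subseteq>) V1 U" "way_below_in {U. openin X U} (\<subseteq>) V2 U"
  shows "way_below_in {U. openin X U} (\<subseteq>) (V1 \<union> V2) U"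
proof (rule wbO_I)
  fix D assume D: "dirO X D" "U \<subseteq> \<Union>D"
  obtain d1 where d1: "d1 \<in> D" "V1 \<subseteq> d1" using wbO_D[OF assms(1) D] by blast
  obtain d2 where d2: "d2 \<in> D" "V2 \<subseteq> d2" using wbO_D[OF assms(2) D] by blast
  obtain c where c: "c \<in> D" "d1 \<subseteq> c" "d2 \<subseteq> c" using dirO_ub[OF D(1) d1(1) d2(1)] by blast
  then have "V1 \<union> V2 \<subseteq> c" using d1(2) d2(2) by blast
  then show "\<exists>d\<in>D. V1 \<union> V2 \<subseteq> d" using c(1) by blast
qed

lemma compact_wbO:
  assumes "compactin X C" "V \<subseteq> C" "C \<subseteq> U"
  shows "way_below_in {U. openin X U} (\<subseteq>) V U"
proof (rule wbO_I)
  fix D assume D: "dirO X D" "U \<subseteq> \<Union>D"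
  have CD: "C \<subseteq> \<Union>D" using assms(3) D(2) by (rule order_trans)
  have oD: "\<forall>d\<in>D. openin X d" using dirO_open[OF D(1)] by blast
  from compactin_use[OF assms(1) oD CD] obtain F where F0: "finite F \<and> F \<subseteq> D \<and> C \<subseteq> \<Union>F" ..
  then have F: "finite F" "F \<subseteq> D" "C \<subseteq> \<Union>F" by auto
  from directed_finite_ub[OF D(1) F(1) F(2)] obtain d where d: "d \<in> D" "\<Union>F \<subseteq> d" by (rule bexE)
  have "V \<subseteq> d" using assms(2) F(3) d(2) by (meson order_trans)
  then show "\<exists>d\<in>D. V \<subseteq> d" using d(1) by blast
qed

lemma core_compact_intro:
  assumes H: "\<And>b x. openin X b \<Longrightarrow> x \<in> b \<Longrightarrow> \<exists>a. openin X a \<and> way_below_in {U. openin X U} (\<subseteq>) a b \<and> x \<in> a"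
  shows "core_compact X"
  unfolding core_compact_def continuous_in_def
proof (intro conjI ballI)
  show "directed_complete_in {U. openin X U} (\<subseteq>)"
    unfolding directed_complete_in_def
  proof (intro allI impI)
    fix D assume "directed_in {U. openin X U} (\<subseteq>) D"
    then have "dirO X D" unfolding directed_O .
    then have "is_sup_in {U. openin X U} (\<subseteq>) D (\<Union>D)" using sup_OX_dir[of X D "\<Union>D"] by blast
    then show "\<exists>s. is_sup_in {U. openin X U} (\<subseteq>) D s" by blast
  qed
next
  fix b assume b: "b \<in> {U. openin X U}"
  define A where "A = {a \<in> {U. openin X U}. way_below_in {U. openin X U} (\<subseteq>) a b}"
  have Ao: "\<forall>d\<in>A. openin X d" unfolding A_def by blast
  have "{} \<in> A" unfolding A_def using wbO_empty[of X b] by simp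
  moreover have "\<forall>a\<in>A. \<forall>c\<in>A. \<exists>e\<in>A. a \<subseteq> e \<and> c \<subseteq> e"
  proof (intro ballI)
    fix a c assume "a \<in> A" "c \<in> A"
    then have "a \<union> c \<in> A" unfolding A_def using wbO_Un[of X a b c] by blast
    then show "\<exists>e\<in>A. a \<subseteq> e \<and> c \<subseteq> e" by blast
  qed
  ultimately show "directed_in {U. openin X U} (\<subseteq>) A" unfolding directed_O dirO_def using Ao by blast
  have "\<Union>A = b"
  proof
    show "\<Union>A \<subseteq> b" unfolding A_def using wbO_le[of X b] b by blast
    show "b \<subseteq> \<Union>A"
    proof
      fix x assume "x \<in> b"
      then obtain a where "openin X a" "way_below_in {U. openin X U} (\<subseteq>) a b" "x \<in> a"
        using H b by blast
      then have "a \<in> A" unfolding A_def by blast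
      then show "x \<in> \<Union>A" using \<open>x \<in> a\<close> by blast
    qed
  qed
  then show "is_sup_in {U. openin X U} (\<subseteq>) A b" using sup_OX[OF Ao] by blast
qed

lemma core_compact_elim:
  assumes "core_compact X" "openin X b" "x \<in> b"
  shows "\<exists>a. openin X a \<and> way_below_in {U. openin X U} (\<subseteq>) a b \<and> x \<in> a"
proof -
  define A where "A = {a \<in> {U. openin X U}. way_below_in {U. openin X U} (\<subseteq>) a b}"
  have "is_sup_in {U. openin X U} (\<subseteq>) A b"
    using assms(1,2) unfolding core_compact_def continuous_in_def A_def by blast
  moreover have Ao: "\<forall>d\<in>A. openin X d" unfolding A_def by blast
  ultimately have "b = \<Union>A" using sup_OX[OF Ao] by blast
  then obtain a where "a \<in> A" "x \<in> a" using assms(3) by blast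
  then show ?thesis unfolding A_def by blast
qed

lemma LC_core:
  assumes lc: "neighbourhood_base_of (compactin X) X"
  shows "core_compact X"
proof (rule core_compact_intro)
  fix b x assume "openin X b" "x \<in> b"
  then obtain U V where "openin X U" "compactin X V" "x \<in> U" "U \<subseteq> V" "V \<subseteq> b"
    using LC_use[OF lc \<open>openin X b\<close> \<open>x \<in> b\<close>] by blast
  then show "\<exists>a. openin X a \<and> way_below_in {U. openin X U} (\<subseteq>) a b \<and> x \<in> a"
    using compact_wbO[of X V U b] by blast
qed


lemma scott_open_D:
  "scott_open P le U \<Longrightarrow> directed_in P le D \<Longrightarrow> is_sup_in P le D s \<Longrightarrow> s \<in> U \<Longrightarrow> D \<inter> U \<noteq> {}"
  unfolding scott_open_def by blast

lemma scott_open_up: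
  "scott_open P le U \<Longrightarrow> x \<in> U \<Longrightarrow> y \<in> P \<Longrightarrow> le x y \<Longrightarrow> y \<in> U"
  unfolding scott_open_def by blast

lemma LC_xi:
  assumes wf: "well_filtered X" and lc: "neighbourhood_base_of (compactin X) X"
  shows "continuous_map X (scott_topology (KX X) KX_le) (up_point X)"
  unfolding continuous_map
proof (intro conjI allI impI)
  show "up_point X ` topspace X \<subseteq> topspace (scott_topology (KX X) KX_le)"
  proof
    fix z assume "z \<in> up_point X ` topspace X"
    then obtain x where "x \<in> topspace X" "z = up_point X x" by blast
    then show "z \<in> topspace (scott_topology (KX X) KX_le)"
      using up_point_KX[of x X] KX_in_scott_top[of z X] by simp
  qed
next
  fix U assume "openin (scott_topology (KX X) KX_le) U"
  then have U: "scott_open (KX X) KX_le U" by (simp add: openin_scott_topology)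
  show "openin X {x \<in> topspace X. up_point X x \<in> U}"
  proof (subst openin_subopen, intro ballI)
    fix x assume x: "x \<in> {x \<in> topspace X. up_point X x \<in> U}"
    then have xt: "x \<in> topspace X" and xU: "up_point X x \<in> U" by auto
    define b where "b = up_point X x"
    have b: "b \<in> KX X" unfolding b_def using up_point_KX[OF xt] .
    have "NB X b \<inter> U \<noteq> {}"
      using scott_open_D[OF U NB_directed[OF lc b] NB_sup[OF lc b]] xU unfolding b_def by blast
    then obtain L where L: "L \<in> NB X b" "L \<in> U" by blast
    have LK: "L \<in> KX X" using L(1) unfolding NB_def by blast
    have "x \<in> b" unfolding b_def using up_point_sub[OF xt] .
    then have xL: "x \<in> X interior_of L" using L(1) unfolding NB_def by blast
    have "X interior_of L \<subseteq> {x \<in> topspace X. up_point X x \<in> U}"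
    proof
      fix y assume y: "y \<in> X interior_of L"
      have yt: "y \<in> topspace X" using y openin_subset[OF openin_interior_of[of X L]] by blast
      have "up_point X y \<subseteq> X interior_of L" using up_point_open[OF openin_interior_of y] .
      then have "up_point X y \<subseteq> L" using interior_of_subset[of X L] by (rule order_trans)
      moreover have "up_point X y \<in> KX X" using up_point_KX[OF yt] .
      ultimately have "up_point X y \<in> U"
        using scott_open_up[OF U L(2), of "up_point X y"] unfolding KX_le_def by blast
      then show "y \<in> {x \<in> topspace X. up_point X x \<in> U}" using yt by blast
    qed
    then show "\<exists>T. openin X T \<and> x \<in> T \<and> T \<subseteq> {x \<in> topspace X. up_point X x \<in> U}"
      using xL openin_interior_of[of X L] by blast
  qed
qed

lemma sat_mono: "C \<subseteq> C' \<Longrightarrow> sat X C \<subseteq> sat X C'"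
  unfolding sat_def by blast

lemma conv_compact:
  fixes y :: "nat \<Rightarrow> 'a"
  assumes xt: "x \<in> topspace X" and yt: "\<And>m. y m \<in> topspace X"
    and conv: "\<And>T. openin X T \<Longrightarrow> x \<in> T \<Longrightarrow> \<exists>N. \<forall>m\<ge>N. y m \<in> T"
  shows "compactin X (insert x (y ` {n..}))"
  unfolding compactin_def
proof (intro conjI allI impI)
  show "insert x (y ` {n..}) \<subseteq> topspace X" using xt yt by blast
next
  fix \<U> assume u: "(\<forall>U\<in>\<U>. openin X U) \<and> insert x (y ` {n..}) \<subseteq> \<Union>\<U>"
  then obtain U0 where U0: "U0 \<in> \<U>" "x \<in> U0" by blast
  then have "openin X U0" using u by blast
  then obtain N where N: "\<forall>m\<ge>N. y m \<in> U0" using conv[OF _ U0(2)] by blast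
  have "\<forall>m\<in>{n..<N}. \<exists>U. U \<in> \<U> \<and> y m \<in> U"
  proof
    fix m assume "m \<in> {n..<N}"
    then have "y m \<in> insert x (y ` {n..})" by simp
    then have "y m \<in> \<Union>\<U>" using u by blast
    then show "\<exists>U. U \<in> \<U> \<and> y m \<in> U" by blast
  qed
  from bchoice[OF this] obtain Uc where Uc: "\<forall>m\<in>{n..<N}. Uc m \<in> \<U> \<and> y m \<in> Uc m" ..
  define F where "F = insert U0 (Uc ` {n..<N})"
  have "finite F" unfolding F_def by simp
  moreover have "F \<subseteq> \<U>" unfolding F_def using U0 Uc by blast
  moreover have "insert x (y ` {n..}) \<subseteq> \<Union>F"
  proof
    fix z assume "z \<in> insert x (y ` {n..})"
    then consider "z = x" | m where "m \<ge> n" "z = y m" by auto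
    then show "z \<in> \<Union>F"
    proof cases
      case 1 then show ?thesis unfolding F_def using U0 by blast
    next
      case (2 m)
      show ?thesis
      proof (cases "m \<ge> N")
        case True then show ?thesis unfolding F_def using N 2 by blast
      next
        case False
        then have "m \<in> {n..<N}" using 2 by simp
        then show ?thesis unfolding F_def using Uc 2 by blast
      qed
    qed
  qed
  ultimately show "\<exists>\<F>. finite \<F> \<and> \<F> \<subseteq> \<U> \<and> insert x (y ` {n..}) \<subseteq> \<Union>\<F>" by blast
qed

lemma countable_chain:
  assumes "countable \<C>" "\<C> \<noteq> {}" "\<forall>V\<in>\<C>. openin X V"
  obtains B where "\<And>n. openin X (B n)" "\<And>n. B n \<subseteq> \<Inter>(from_nat_into \<C> ` {..n})"
    "\<And>n. B n = \<Inter>(from_nat_into \<C> ` {..n})"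
    "\<And>m n. n \<le> m \<Longrightarrow> B m \<subseteq> B n"
    "\<And>V. V \<in> \<C> \<Longrightarrow> \<exists>n. B n \<subseteq> V"
proof -
  define c where "c = from_nat_into \<C>"
  define B where "B n = \<Inter>(c ` {..n})" for n
  have cC: "c n \<in> \<C>" for n unfolding c_def using from_nat_into[OF assms(2)] .
  have "openin X (B n)" for n
    unfolding B_def by (rule openin_Inter) (use cC assms(3) in auto)
  moreover have "n \<le> m \<Longrightarrow> B m \<subseteq> B n" for m n unfolding B_def by auto
  moreover have "\<exists>n. B n \<subseteq> V" if "V \<in> \<C>" for V
  proof -
    have "\<exists>n. from_nat_into \<C> n = V" using from_nat_into_surj[OF assms(1) that] .
    then obtain n where "c n = V" unfolding c_def by blast
    then have "B n \<subseteq> V" unfolding B_def by auto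
    then show ?thesis by blast
  qed
  ultimately show ?thesis using that[of B] unfolding B_def c_def by blast
qed

lemma first_countable_chain:
  assumes fc: "first_countable X" and xt: "x \<in> topspace X"
  obtains B :: "nat \<Rightarrow> 'a set" where "\<And>n. openin X (B n)" "\<And>n. x \<in> B n" "\<And>m n. n \<le> m \<Longrightarrow> B m \<subseteq> B n"
    "\<And>T. openin X T \<Longrightarrow> x \<in> T \<Longrightarrow> \<exists>n. B n \<subseteq> T"
proof -
  have "\<forall>x \<in> topspace X. \<exists>\<B>. countable \<B> \<and> (\<forall>V \<in> \<B>. openin X V) \<and>
             (\<forall>U. openin X U \<and> x \<in> U \<longrightarrow> (\<exists>V \<in> \<B>. x \<in> V \<and> V \<subseteq> U))"
    using fc unfolding first_countable_def .
  then have "\<exists>\<B>. countable \<B> \<and> (\<forall>V \<in> \<B>. openin X V) \<and>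
             (\<forall>U. openin X U \<and> x \<in> U \<longrightarrow> (\<exists>V \<in> \<B>. x \<in> V \<and> V \<subseteq> U))"
    using xt by (rule bspec)
  then obtain \<B> where B0: "countable \<B> \<and> (\<forall>V \<in> \<B>. openin X V) \<and>
             (\<forall>U. openin X U \<and> x \<in> U \<longrightarrow> (\<exists>V \<in> \<B>. x \<in> V \<and> V \<subseteq> U))" ..
  have B: "countable \<B>" "\<forall>V\<in>\<B>. openin X V"
    "\<forall>U. openin X U \<and> x \<in> U \<longrightarrow> (\<exists>V\<in>\<B>. x \<in> V \<and> V \<subseteq> U)"
    using B0 by (rule conjunct1, rule conjunct1[OF conjunct2], rule conjunct2[OF conjunct2])
  define \<C> where "\<C> = {V\<in>\<B>. x \<in> V}"
  have "countable \<C>" unfolding \<C>_def using B(1) by simp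
  moreover have "\<C> \<noteq> {}" unfolding \<C>_def using B(3) xt by blast
  moreover have "\<forall>V\<in>\<C>. openin X V" unfolding \<C>_def using B(2) by blast
  ultimately obtain C where C: "\<And>n. openin X (C n)" "\<And>n. C n = \<Inter>(from_nat_into \<C> ` {..n})"
    "\<And>m n. n \<le> m \<Longrightarrow> C m \<subseteq> C n" "\<And>V. V \<in> \<C> \<Longrightarrow> \<exists>n. C n \<subseteq> V"
    by (rule countable_chain) blast
  have xC: "x \<in> C n" for n
  proof -
    have "\<forall>i. from_nat_into \<C> i \<in> \<C>" using from_nat_into[OF \<open>\<C> \<noteq> {}\<close>] by blast
    then have "\<forall>i. x \<in> from_nat_into \<C> i" unfolding \<C>_def by blast
    then show ?thesis unfolding C(2) by blast
  qed
  have bC: "\<exists>n. C n \<subseteq> T" if "openin X T" "x \<in> T" for T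
  proof -
    have "\<exists>V\<in>\<B>. x \<in> V \<and> V \<subseteq> T" using B(3) that by simp
    then obtain V where "V \<in> \<B>" "x \<in> V" "V \<subseteq> T" by blast
    then have "V \<in> \<C>" unfolding \<C>_def by blast
    then obtain n where "C n \<subseteq> V" using C(4) by blast
    then show ?thesis using \<open>V \<subseteq> T\<close> by blast
  qed
  show ?thesis by (rule that[OF C(1) xC C(3) bC])
qed


lemma wb_point_interior:
  assumes wf: "well_filtered X" and fc: "first_countable X" and xt: "x \<in> topspace X"
    and K: "K \<in> KX X" and wb: "way_below_in (KX X) KX_le K (up_point X x)"
  shows "x \<in> X interior_of K"
proof (rule ccontr)
  assume nx: "x \<notin> X interior_of K"
  obtain B :: "nat \<Rightarrow> 'a set" where HB: "\<And>n. openin X (B n)" "\<And>n. x \<in> B n"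
    "\<And>m n. n \<le> m \<Longrightarrow> B m \<subseteq> B n" "\<And>T. openin X T \<Longrightarrow> x \<in> T \<Longrightarrow> \<exists>n. B n \<subseteq> T"
    by (rule first_countable_chain[OF fc xt]) blast
  have "\<forall>n. \<exists>z. z \<in> B n \<and> z \<notin> K"
  proof
    fix n show "\<exists>z. z \<in> B n \<and> z \<notin> K"
    proof (rule ccontr)
      assume "\<not> (\<exists>z. z \<in> B n \<and> z \<notin> K)"
      then have "B n \<subseteq> K" by blast
      then have "B n \<subseteq> X interior_of K" using HB(1) by (rule interior_of_maximal)
      then show False using HB(2) nx by blast
    qed
  qed
  from choice[OF this] obtain y where y: "\<forall>n. y n \<in> B n \<and> y n \<notin> K" ..
  have yt: "y m \<in> topspace X" for m
  proof -
    have "y m \<in> B m" using y by blast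
    then show ?thesis using openin_subset[OF HB(1)[of m]] by blast
  qed
  have conv: "\<exists>N. \<forall>m\<ge>N. y m \<in> T" if T: "openin X T" "x \<in> T" for T
  proof -
    obtain N where N: "B N \<subseteq> T" using HB(4)[OF T(1) T(2)] by blast
    have "\<forall>m\<ge>N. y m \<in> T"
    proof (intro allI impI)
      fix m assume "N \<le> m"
      then have "B m \<subseteq> B N" by (rule HB(3))
      moreover have "y m \<in> B m" using y by blast
      ultimately show "y m \<in> T" using N by blast
    qed
    then show ?thesis by blast
  qed
  define Q where "Q n = sat X (insert x (y ` {n..}))" for n
  have ins_top: "insert x (y ` {n..}) \<subseteq> topspace X" for n using xt yt by blast
  have QK: "Q n \<in> KX X" for n
  proof -
    have c: "compactin X (Q n)" unfolding Q_def
      by (rule sat_compact, rule conv_compact[OF xt yt conv])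
    have "x \<in> Q n" unfolding Q_def using sat_sub[OF ins_top[of n]] by blast
    then show ?thesis unfolding KX_def using c sat_saturated[of X] unfolding Q_def by blast
  qed
  have ymQ: "y n \<in> Q n" for n unfolding Q_def using sat_sub[OF ins_top[of n]] by blast
  have Qmono: "Q m \<subseteq> Q n" if "n \<le> m" for n m
    unfolding Q_def by (rule sat_mono) (use that in auto)
  have dQ: "directed_in (KX X) KX_le (range Q)"
    unfolding directed_KX
  proof (intro conjI)
    show "range Q \<subseteq> KX X" using QK by blast
    show "range Q \<noteq> {}" by simp
    show "\<forall>A\<in>range Q. \<forall>B\<in>range Q. \<exists>C\<in>range Q. C \<subseteq> A \<and> C \<subseteq> B"
    proof (intro ballI)
      fix A B assume "A \<in> range Q" "B \<in> range Q"
      then obtain i j where ij: "A = Q i" "B = Q j" by blast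
      have "Q (max i j) \<subseteq> Q i" "Q (max i j) \<subseteq> Q j" using Qmono by auto
      then show "\<exists>C\<in>range Q. C \<subseteq> A \<and> C \<subseteq> B" using ij by blast
    qed
  qed
  have "\<Inter>(range Q) \<subseteq> up_point X x"
  proof
    fix z assume z: "z \<in> \<Inter>(range Q)"
    have "z \<in> Q 0" using z by blast
    then have zt: "z \<in> topspace X" using KX_sub[OF QK[of 0]] by blast
    have "\<forall>T. openin X T \<and> x \<in> T \<longrightarrow> z \<in> T"
    proof (intro allI impI)
      fix T assume T: "openin X T \<and> x \<in> T"
      then obtain N where N: "B N \<subseteq> T" using HB(4) by blast
      have "z \<in> Q N" using z by blast
      then obtain c where c: "c \<in> insert x (y ` {N..})" "spec_le X c z" unfolding Q_def sat_def by blast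
      have "c \<in> T"
      proof (cases "c = x")
        case True then show ?thesis using T by blast
      next
        case False
        then obtain m where m: "m \<ge> N" "c = y m" using c(1) by auto
        have "y m \<in> B m" using y by blast
        moreover have "B m \<subseteq> B N" using m(1) by (rule HB(3))
        ultimately show ?thesis using N m(2) by blast
      qed
      then show "z \<in> T" using open_upper[of X T c z] T c(2) by blast
    qed
    then have "spec_le X x z" unfolding spec_le_iff using xt zt by blast
    then show "z \<in> up_point X x" unfolding up_point_def by blast
  qed
  then obtain d where "d \<in> range Q" "d \<subseteq> K" using wb dQ unfolding wb_KX[OF wf] by blast
  then obtain n where "Q n \<subseteq> K" by blast
  then show False using ymQ[of n] y by blast
qed

lemma cont_LC:
  assumes wf: "well_filtered X" and fc: "first_countable X" and c: "continuous_in (KX X) KX_le"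
  shows "neighbourhood_base_of (compactin X) X"
  unfolding neighbourhood_base_of
proof (intro allI impI)
  fix W x assume Wx: "openin X W \<and> x \<in> W"
  then have xt: "x \<in> topspace X" using openin_subset by blast
  define b where "b = up_point X x"
  have b: "b \<in> KX X" unfolding b_def using up_point_KX[OF xt] .
  define A where "A = {a \<in> KX X. way_below_in (KX X) KX_le a b}"
  have dA: "directed_in (KX X) KX_le A" and sA: "is_sup_in (KX X) KX_le A b"
    using c b unfolding continuous_in_def A_def by blast+
  have "\<Inter>A \<in> KX X" using WF_Inter[OF wf dA] .
  then have "b = \<Inter>A" using sup_KX_Inter[OF dA] sA by blast
  moreover have "b \<subseteq> W" unfolding b_def using up_point_open[of X W x] Wx by blast
  ultimately have "\<Inter>A \<subseteq> W" by simp
  then obtain K where K: "K \<in> A" "K \<subseteq> W" using WF_use[OF wf _ dA] Wx by blast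
  have KK: "K \<in> KX X" and wbK: "way_below_in (KX X) KX_le K (up_point X x)"
    using K(1) unfolding A_def b_def by blast+
  have "x \<in> X interior_of K" using wb_point_interior[OF wf fc xt KK wbK] .
  then show "\<exists>U V. openin X U \<and> compactin X V \<and> x \<in> U \<and> U \<subseteq> V \<and> V \<subseteq> W"
    using KX_compact[OF KK] K(2) interior_of_subset[of X K] openin_interior_of[of X K] by blast
qed


lemma prime_point:
  assumes sc: "second_countable X" and wf: "well_filtered X"
    and P: "openin X P" and Pn: "\<not> topspace X \<subseteq> P"
    and prime: "\<And>P1 P2. openin X P1 \<Longrightarrow> openin X P2 \<Longrightarrow> P1 \<inter> P2 \<subseteq> P \<Longrightarrow> P1 \<subseteq> P \<or> P2 \<subseteq> P"
  shows "\<exists>y\<in>topspace X. y \<notin> P \<and> (\<forall>W. openin X W \<and> \<not> W \<subseteq> P \<longrightarrow> y \<in> W)"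
proof -
  obtain \<B> where B0: "countable \<B> \<and> (\<forall>V \<in> \<B>. openin X V) \<and>
             (\<forall>U x. openin X U \<and> x \<in> U \<longrightarrow> (\<exists>V \<in> \<B>. x \<in> V \<and> V \<subseteq> U))"
    using sc unfolding second_countable_def by (elim exE)
  have Bc: "countable \<B>" and Bo: "\<forall>V\<in>\<B>. openin X V"
    and Bb: "\<forall>U x. openin X U \<and> x \<in> U \<longrightarrow> (\<exists>V\<in>\<B>. x \<in> V \<and> V \<subseteq> U)"
    using B0 by (rule conjunct1, rule conjunct1[OF conjunct2], rule conjunct2[OF conjunct2])
  have base: "\<exists>V\<in>\<B>. z \<in> V \<and> V \<subseteq> U" if "openin X U" "z \<in> U" for U z
    using Bb that by simp
  define \<C> where "\<C> = {V\<in>\<B>. \<not> V \<subseteq> P}"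
  obtain z where z: "z \<in> topspace X" "z \<notin> P" using Pn by blast
  obtain V0 where V0: "V0 \<in> \<B>" "z \<in> V0" "V0 \<subseteq> topspace X" using base[OF openin_topspace z(1)] by blast
  have Cne: "\<C> \<noteq> {}" unfolding \<C>_def using V0 z(2) by blast
  have Cc: "countable \<C>" unfolding \<C>_def using Bc by simp
  define c where "c = from_nat_into \<C>"
  have cC: "c n \<in> \<C>" for n unfolding c_def using from_nat_into[OF Cne] .
  have co: "openin X (c n)" for n using cC[of n] Bo unfolding \<C>_def by blast
  have cnP: "\<not> c n \<subseteq> P" for n using cC[of n] unfolding \<C>_def by blast
  define I where "I n = \<Inter>(c ` {..n})" for n
  have ISuc: "I (Suc n) = I n \<inter> c (Suc n)" for n unfolding I_def by (auto simp: atMost_Suc)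
  have Io: "openin X (I n)" for n unfolding I_def by (rule openin_Inter) (use co in auto)
  have InP: "\<not> I n \<subseteq> P" for n
  proof (induction n)
    case 0
    then show ?case unfolding I_def using cnP[of 0] by simp
  next
    case (Suc n)
    show ?case
    proof
      assume "I (Suc n) \<subseteq> P"
      then have "I n \<inter> c (Suc n) \<subseteq> P" unfolding ISuc .
      then have "I n \<subseteq> P \<or> c (Suc n) \<subseteq> P" using prime[OF Io co] by blast
      then show False using Suc.IH cnP by blast
    qed
  qed
  have "\<forall>n. \<exists>a. a \<in> I n \<and> a \<notin> P" using InP by blast
  from choice[OF this] obtain a where a: "\<forall>n. a n \<in> I n \<and> a n \<notin> P" ..
  have at: "a m \<in> topspace X" for m
  proof -
    have "a m \<in> I m" using a by blast
    then show ?thesis using openin_subset[OF Io[of m]] by blast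
  qed
  have tail: "\<exists>N. \<forall>m\<ge>N. a m \<in> W" if W: "openin X W" "\<not> W \<subseteq> P" for W
  proof -
    obtain w where w: "w \<in> W" "w \<notin> P" using W(2) by blast
    obtain V where V: "V \<in> \<B>" "w \<in> V" "V \<subseteq> W" using base[OF W(1) w(1)] by blast
    have "V \<in> \<C>" unfolding \<C>_def using V w(2) by blast
    then have "\<exists>i. from_nat_into \<C> i = V" using from_nat_into_surj[OF Cc] by blast
    then obtain i where i: "c i = V" unfolding c_def by blast
    have "\<forall>m\<ge>i. a m \<in> W"
    proof (intro allI impI)
      fix m assume "i \<le> m"
      have "a m \<in> I m" using a by blast
      then have "a m \<in> c i" unfolding I_def using \<open>i \<le> m\<close> by auto
      then show "a m \<in> W" using i V(3) by blast
    qed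
    then show ?thesis by blast
  qed
  define Q where "Q n = sat X (insert (a n) (a ` {n..}))" for n
  have ins_top: "insert (a n) (a ` {n..}) \<subseteq> topspace X" for n using at by blast
  have QK: "Q n \<in> KX X" for n
  proof -
    have conv: "\<exists>N. \<forall>m\<ge>N. a m \<in> T" if T: "openin X T" "a n \<in> T" for T
    proof -
      have "\<not> T \<subseteq> P" using T(2) a by blast
      then show ?thesis using tail[OF T(1)] by blast
    qed
    have cq: "compactin X (Q n)" unfolding Q_def
      by (rule sat_compact, rule conv_compact[OF at at conv])
    have "a n \<in> Q n" unfolding Q_def using sat_sub[OF ins_top[of n]] by blast
    then show ?thesis unfolding KX_def using cq sat_saturated[of X] unfolding Q_def by blast
  qed
  have amQ: "a n \<in> Q n" for n unfolding Q_def using sat_sub[OF ins_top[of n]] by blast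
  have Qmono: "Q m \<subseteq> Q n" if "n \<le> m" for n m
    unfolding Q_def by (rule sat_mono) (use that in auto)
  have dQ: "directed_in (KX X) KX_le (range Q)"
    unfolding directed_KX
  proof (intro conjI)
    show "range Q \<subseteq> KX X" using QK by blast
    show "range Q \<noteq> {}" by simp
    show "\<forall>A\<in>range Q. \<forall>B\<in>range Q. \<exists>C\<in>range Q. C \<subseteq> A \<and> C \<subseteq> B"
    proof (intro ballI)
      fix A B assume "A \<in> range Q" "B \<in> range Q"
      then obtain i j where ij: "A = Q i" "B = Q j" by blast
      have "Q (max i j) \<subseteq> Q i" "Q (max i j) \<subseteq> Q j" using Qmono by auto
      then show "\<exists>C\<in>range Q. C \<subseteq> A \<and> C \<subseteq> B" using ij by blast
    qed
  qed
  have "\<not> \<Inter>(range Q) \<subseteq> P"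
  proof
    assume "\<Inter>(range Q) \<subseteq> P"
    then obtain d where "d \<in> range Q" "d \<subseteq> P" using WF_use[OF wf P dQ] by blast
    then obtain n where "Q n \<subseteq> P" by blast
    then show False using amQ[of n] a by blast
  qed
  then obtain y where y: "y \<in> \<Inter>(range Q)" "y \<notin> P" by blast
  have "y \<in> Q 0" using y by blast
  then have yt: "y \<in> topspace X" using KX_sub[OF QK[of 0]] by blast
  have "\<forall>W. openin X W \<and> \<not> W \<subseteq> P \<longrightarrow> y \<in> W"
  proof (intro allI impI)
    fix W assume W: "openin X W \<and> \<not> W \<subseteq> P"
    then obtain N where N: "\<forall>m\<ge>N. a m \<in> W" using tail by blast
    have "y \<in> Q N" using y by blast
    then obtain e where e: "e \<in> insert (a N) (a ` {N..})" "spec_le X e y" unfolding Q_def sat_def by blast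
    have "e \<in> W" using e(1) N by auto
    then show "y \<in> W" using open_upper[of X W e y] W e(2) by blast
  qed
  then show ?thesis using yt y(2) by blast
qed

lemma interpolate:
  assumes cc: "core_compact X" and U: "openin X U" and wb: "way_below_in {U. openin X U} (\<subseteq>) V U"
  shows "\<exists>W. openin X W \<and> way_below_in {U. openin X U} (\<subseteq>) V W \<and> way_below_in {U. openin X U} (\<subseteq>) W U"
proof -
  define S where "S = {V'. \<exists>W'. openin X V' \<and> openin X W' \<and> way_below_in {U. openin X U} (\<subseteq>) V' W'
                          \<and> way_below_in {U. openin X U} (\<subseteq>) W' U}"
  have Sne: "{} \<in> S" unfolding S_def using wbO_empty[of X] openin_empty[of X] by blast
  have So: "\<forall>d\<in>S. openin X d" unfolding S_def by blast
  have Sd: "\<forall>a\<in>S. \<forall>b\<in>S. \<exists>c\<in>S. a \<subseteq> c \<and> b \<subseteq> c"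
  proof (intro ballI)
    fix a b assume "a \<in> S" "b \<in> S"
    then obtain Wa Wb where Wa: "openin X a" "openin X Wa" "way_below_in {U. openin X U} (\<subseteq>) a Wa"
        "way_below_in {U. openin X U} (\<subseteq>) Wa U"
      and Wb: "openin X b" "openin X Wb" "way_below_in {U. openin X U} (\<subseteq>) b Wb"
        "way_below_in {U. openin X U} (\<subseteq>) Wb U"
      unfolding S_def by blast
    have "way_below_in {U. openin X U} (\<subseteq>) a (Wa \<union> Wb)" using wbO_mono[OF Wa(3)] by blast
    moreover have "way_below_in {U. openin X U} (\<subseteq>) b (Wa \<union> Wb)" using wbO_mono[OF Wb(3)] by blast
    ultimately have "way_below_in {U. openin X U} (\<subseteq>) (a \<union> b) (Wa \<union> Wb)" by (rule wbO_Un)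
    moreover have "way_below_in {U. openin X U} (\<subseteq>) (Wa \<union> Wb) U" using wbO_Un[OF Wa(4) Wb(4)] .
    moreover have "openin X (a \<union> b)" "openin X (Wa \<union> Wb)" using Wa Wb by auto
    ultimately have "a \<union> b \<in> S" unfolding S_def by blast
    then show "\<exists>c\<in>S. a \<subseteq> c \<and> b \<subseteq> c" by blast
  qed
  have dS: "dirO X S" unfolding dirO_def using Sne So Sd by blast
  have "U \<subseteq> \<Union>S"
  proof
    fix x assume "x \<in> U"
    obtain W' where W': "openin X W'" "way_below_in {U. openin X U} (\<subseteq>) W' U" "x \<in> W'"
      using core_compact_elim[OF cc U \<open>x \<in> U\<close>] by blast
    obtain V' where V': "openin X V'" "way_below_in {U. openin X U} (\<subseteq>) V' W'" "x \<in> V'"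
      using core_compact_elim[OF cc W'(1) W'(3)] by blast
    have "V' \<in> S" unfolding S_def using V' W' by blast
    then show "x \<in> \<Union>S" using V'(3) by blast
  qed
  then obtain d where d: "d \<in> S" "V \<subseteq> d" using wbO_D[OF wb dS] by blast
  then obtain W' where W': "openin X W'" "way_below_in {U. openin X U} (\<subseteq>) d W'"
      "way_below_in {U. openin X U} (\<subseteq>) W' U"
    unfolding S_def by blast
  have "way_below_in {U. openin X U} (\<subseteq>) V W'" using wbO_mono[OF W'(2) d(2)] by blast
  then show ?thesis using W' by blast
qed


abbreviation wbO :: "'a topology \<Rightarrow> 'a set \<Rightarrow> 'a set \<Rightarrow> bool" where
  "wbO X a b \<equiv> way_below_in {U. openin X U} (\<subseteq>) a b"

lemma core_LC:
  assumes sc: "second_countable X" and wf: "well_filtered X" and cc: "core_compact X"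
  shows "neighbourhood_base_of (compactin X) X"
  unfolding neighbourhood_base_of
proof (intro allI impI)
  fix W x assume Wx: "openin X W \<and> x \<in> W"
  obtain V where V: "openin X V" "wbO X V W" "x \<in> V"
    using core_compact_elim[OF cc] Wx by blast
  define step where "step U = (SOME W'. openin X W' \<and> wbO X V W' \<and> wbO X W' U)" for U
  define Wc where "Wc = rec_nat W (\<lambda>n U. step U)"
  have Wc0: "Wc 0 = W" unfolding Wc_def by simp
  have WcS: "Wc (Suc n) = step (Wc n)" for n unfolding Wc_def by simp
  have stepP: "openin X (step U) \<and> wbO X V (step U) \<and> wbO X (step U) U"
    if "openin X U" "wbO X V U" for U
  proof -
    have "\<exists>W'. openin X W' \<and> wbO X V W' \<and> wbO X W' U" using interpolate[OF cc that(1) that(2)] .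
    then show ?thesis unfolding step_def by (rule someI_ex)
  qed
  have inv: "openin X (Wc n) \<and> wbO X V (Wc n)" for n
  proof (induction n)
    case 0 show ?case using Wx V Wc0 by simp
  next
    case (Suc n)
    then show ?case using stepP[of "Wc n"] WcS[of n] by simp
  qed
  have Wo: "openin X (Wc n)" for n using inv by blast
  have wbS: "wbO X (Wc (Suc n)) (Wc n)" for n using stepP[of "Wc n"] inv[of n] WcS[of n] by simp
  have VW: "V \<subseteq> Wc n" for n using wbO_le[OF Wo] inv by blast
  have dec: "Wc (Suc n) \<subseteq> Wc n" for n using wbO_le[OF Wo wbS] .
  have anti: "Wc m \<subseteq> Wc n" if "n \<le> m" for n m
    using lift_Suc_antimono_le[of Wc, OF dec that] .
  define K where "K = \<Inter>(range Wc)"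
  have VK: "V \<subseteq> K" unfolding K_def using VW by blast
  have KW: "K \<subseteq> W" unfolding K_def using Wc0 by blast
  have H: "\<exists>n. Wc n \<subseteq> Ob" if Ob: "openin X Ob" "K \<subseteq> Ob" for Ob
  proof (rule ccontr)
    assume nH: "\<not> (\<exists>n. Wc n \<subseteq> Ob)"
    define \<S> where "\<S> = {P. openin X P \<and> Ob \<subseteq> P \<and> (\<forall>n. \<not> Wc n \<subseteq> P)}"
    have OS: "Ob \<in> \<S>" using Ob nH unfolding \<S>_def by blast
    have ch: "\<Union>\<C> \<in> \<S>" if Cne: "\<C> \<noteq> {}" and Cc: "subset.chain \<S> \<C>" for \<C>
    proof -
      have CS: "\<C> \<subseteq> \<S>" and Cch: "\<forall>A\<in>\<C>. \<forall>B\<in>\<C>. A \<subseteq> B \<or> B \<subseteq> A"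
        using Cc unfolding subset_chain_def by blast+
      have Co: "\<forall>d\<in>\<C>. openin X d" using CS unfolding \<S>_def by blast
      have "openin X (\<Union>\<C>)" using Co by (intro openin_Union) blast
      moreover have "Ob \<subseteq> \<Union>\<C>"
      proof -
        obtain P0 where "P0 \<in> \<C>" using Cne by blast
        then have "Ob \<subseteq> P0" using CS unfolding \<S>_def by blast
        then show ?thesis using \<open>P0 \<in> \<C>\<close> by blast
      qed
      moreover have "\<forall>n. \<not> Wc n \<subseteq> \<Union>\<C>"
      proof (intro allI notI)
        fix n assume Wn: "Wc n \<subseteq> \<Union>\<C>"
        have "\<forall>a\<in>\<C>. \<forall>b\<in>\<C>. \<exists>c\<in>\<C>. a \<subseteq> c \<and> b \<subseteq> c"
        proof (intro ballI)
          fix a b assume "a \<in> \<C>" "b \<in> \<C>"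
          then have "a \<subseteq> b \<or> b \<subseteq> a" using Cch by blast
          then show "\<exists>c\<in>\<C>. a \<subseteq> c \<and> b \<subseteq> c" using \<open>a \<in> \<C>\<close> \<open>b \<in> \<C>\<close> by blast
        qed
        then have "dirO X \<C>" unfolding dirO_def using Cne Co by blast
        then obtain P where P: "P \<in> \<C>" "Wc (Suc n) \<subseteq> P" using wbO_D[OF wbS[of n] _ Wn] by blast
        have "P \<in> \<S>" using P(1) CS by blast
        then show False using P(2) unfolding \<S>_def by blast
      qed
      ultimately show ?thesis unfolding \<S>_def by blast
    qed
    obtain M where M: "M \<in> \<S>" "\<forall>Y\<in>\<S>. M \<subseteq> Y \<longrightarrow> Y = M"
      using subset_Zorn_nonempty[of \<S>] OS ch by blast
    have Mo: "openin X M" "Ob \<subseteq> M" "\<forall>n. \<not> Wc n \<subseteq> M" using M(1) unfolding \<S>_def by blast+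
    have Mtop: "\<not> topspace X \<subseteq> M"
    proof
      assume "topspace X \<subseteq> M"
      then have "Wc 0 \<subseteq> M" using openin_subset[OF Wo[of 0]] by blast
      then show False using Mo(3) by blast
    qed
    have prime: "P1 \<subseteq> M \<or> P2 \<subseteq> M" if P12: "openin X P1" "openin X P2" "P1 \<inter> P2 \<subseteq> M" for P1 P2
    proof (rule ccontr)
      assume "\<not> (P1 \<subseteq> M \<or> P2 \<subseteq> M)"
      then have n1: "\<not> P1 \<subseteq> M" and n2: "\<not> P2 \<subseteq> M" by auto
      have ex: "\<exists>k. Wc k \<subseteq> M \<union> Pi" if Pi: "openin X Pi" "\<not> Pi \<subseteq> M" for Pi
      proof -
        have "M \<union> Pi \<notin> \<S>"
        proof
          assume "M \<union> Pi \<in> \<S>"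
          then have "M \<union> Pi = M" using M(2) by blast
          then show False using Pi(2) by blast
        qed
        moreover have "openin X (M \<union> Pi)" using Mo(1) Pi(1) by blast
        moreover have "Ob \<subseteq> M \<union> Pi" using Mo(2) by blast
        ultimately show ?thesis unfolding \<S>_def by blast
      qed
      obtain k1 where k1: "Wc k1 \<subseteq> M \<union> P1" using ex[OF P12(1) n1] by blast
      obtain k2 where k2: "Wc k2 \<subseteq> M \<union> P2" using ex[OF P12(2) n2] by blast
      have "Wc (max k1 k2) \<subseteq> Wc k1" "Wc (max k1 k2) \<subseteq> Wc k2" using anti by auto
      then have "Wc (max k1 k2) \<subseteq> M" using k1 k2 P12(3) by blast
      then show False using Mo(3) by blast
    qed
    obtain y where y: "y \<in> topspace X" "y \<notin> M" "\<forall>W. openin X W \<and> \<not> W \<subseteq> M \<longrightarrow> y \<in> W"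
      using prime_point[OF sc wf Mo(1) Mtop prime] by blast
    have "y \<in> Wc n" for n using y(3) Wo[of n] Mo(3) by blast
    then have "y \<in> K" unfolding K_def by blast
    then show False using Ob(2) Mo(2) y(2) by blast
  qed
  have Kc: "compactin X K"
    unfolding compactin_def
  proof (intro conjI allI impI)
    show "K \<subseteq> topspace X" using KW openin_subset[of X W] Wx by blast
  next
    fix \<U> assume u: "(\<forall>U\<in>\<U>. openin X U) \<and> K \<subseteq> \<Union>\<U>"
    have "openin X (\<Union>\<U>)" using u by (intro openin_Union) blast
    then obtain n where n: "Wc n \<subseteq> \<Union>\<U>" using H u by blast
    define D where "D = {\<Union>F | F. finite F \<and> F \<subseteq> \<U>}"
    have "{} \<in> D" unfolding D_def by blast
    moreover have Do: "\<forall>d\<in>D. openin X d" unfolding D_def using u by blast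
    moreover have "\<forall>a\<in>D. \<forall>b\<in>D. \<exists>c\<in>D. a \<subseteq> c \<and> b \<subseteq> c"
    proof (intro ballI)
      fix a b assume "a \<in> D" "b \<in> D"
      then obtain F1 F2 where F: "a = \<Union>F1" "finite F1" "F1 \<subseteq> \<U>" "b = \<Union>F2" "finite F2" "F2 \<subseteq> \<U>"
        unfolding D_def by blast
      then have "\<Union>(F1 \<union> F2) \<in> D" unfolding D_def by blast
      moreover have "a \<subseteq> \<Union>(F1 \<union> F2)" "b \<subseteq> \<Union>(F1 \<union> F2)" using F by auto
      ultimately show "\<exists>c\<in>D. a \<subseteq> c \<and> b \<subseteq> c" by blast
    qed
    ultimately have dD: "dirO X D" unfolding dirO_def by blast
    have "\<Union>\<U> \<subseteq> \<Union>D"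
    proof
      fix z assume "z \<in> \<Union>\<U>"
      then obtain U where "U \<in> \<U>" "z \<in> U" by blast
      then have "\<Union>{U} \<in> D" unfolding D_def by blast
      then show "z \<in> \<Union>D" using \<open>z \<in> U\<close> by blast
    qed
    then have "Wc n \<subseteq> \<Union>D" using n by (rule order_trans[rotated])
    then obtain d where d: "d \<in> D" "Wc (Suc n) \<subseteq> d" using wbO_D[OF wbS[of n] dD] by blast
    then obtain F where F: "d = \<Union>F" "finite F" "F \<subseteq> \<U>" unfolding D_def by blast
    have "K \<subseteq> Wc (Suc n)" unfolding K_def by blast
    then have "K \<subseteq> \<Union>F" using d(2) F(1) by blast
    then show "\<exists>\<F>. finite \<F> \<and> \<F> \<subseteq> \<U> \<and> K \<subseteq> \<Union>\<F>" using F(2,3) by blast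
  qed
  show "\<exists>U V'. openin X U \<and> compactin X V' \<and> x \<in> U \<and> U \<subseteq> V' \<and> V' \<subseteq> W"
    using V(1,3) Kc VK KW by blast
qed


theorem mainTheorem17:
  fixes X :: "'a topology"
  assumes "t0_space X" and "second_countable X" and "well_filtered X"
  shows "(neighbourhood_base_of (compactin X) X
            \<longleftrightarrow> continuous_in (KX X) KX_le \<and>
                continuous_map X (scott_topology (KX X) KX_le) (up_point X))
       \<and> (continuous_in (KX X) KX_le \<and>
                continuous_map X (scott_topology (KX X) KX_le) (up_point X)
            \<longleftrightarrow> continuous_in (KX X) KX_le \<and> property_Q X)
       \<and> (continuous_in (KX X) KX_le \<and> property_Q X
            \<longleftrightarrow> continuous_in (KX X) KX_le)
       \<and> (continuous_in (KX X) KX_le \<longleftrightarrow> core_compact X)"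
proof -
  have sc: "second_countable X" and wf: "well_filtered X" using assms by blast+
  have fc: "first_countable X" using second_countable_imp_first_countable[OF sc] .
  have a1: "continuous_in (KX X) KX_le" if "neighbourhood_base_of (compactin X) X"
    using LC_cont[OF wf that] .
  have a2: "continuous_map X (scott_topology (KX X) KX_le) (up_point X)" if "neighbourhood_base_of (compactin X) X"
    using LC_xi[OF wf that] .
  have a3: "property_Q X" if "neighbourhood_base_of (compactin X) X"
    using LC_Q[OF wf that] .
  have a4: "core_compact X" if "neighbourhood_base_of (compactin X) X"
    using LC_core[OF that] .
  have b1: "neighbourhood_base_of (compactin X) X" if "continuous_in (KX X) KX_le"
    using cont_LC[OF wf fc that] .
  have b2: "neighbourhood_base_of (compactin X) X" if "core_compact X"
    using core_LC[OF sc wf that] .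
  show ?thesis using a1 a2 a3 a4 b1 b2 by blast
qed

end
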